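(* Let $G$ be a connected finite simple graph with vertex set $[n]$. Then the connected subgraph arrangement $\mathcal{A}_G$ in $\mathbb{Q}^n$ is projectively unique: for every hyperplane arrangement $\mathcal{C}$ in $\mathbb{Q}^n$ whose intersection lattice $L(\mathcal{C})$ is isomorphic as a poset to $L(\mathcal{A}_G)$, there exists $\varphi\in \mathrm{GL}(\mathbb{Q}^n)$ with $\mathcal{C}=\{\varphi(H)\mid H\in\mathcal{A}_G\}$.
   Context: Let $G=(N,E)$ be a finite simple graph with vertex set $N=[n]=\{1,\dots,n\}$. For $\varnothing\neq I\subseteq N$, $G[I]$ denotes the induced subgraph on $I$, and $H_I:=\ker\big(\sum_{i\in I}x_i\big)$, where $x_1,\dots,x_n$ are the coordinate functions on $\mathbb{K}^n$ for a field $\mathbb{K}$. The connected subgraph arrangement is $\mathcal{A}_G(\mathbb{K}):=\{H_I\mid \varnothing\neq I\subseteq N,\ G[I]\text{ connected}\}$, a central hyperplane arrangement in $\mathbb{K}^n$; $\mathcal{A}_G:=\mathcal{A}_G(\mathbb{Q})$. The intersection lattice $L(\mathcal{A})$ of an arrangement is the set of all intersections of subsets of $\mathcal{A}$ (including $V$ itself), ordered by reverse inclusion. *)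

theory Defs
  imports Main "HOL.Rat"
begin

text \<open>Vertices of the graph are the elements of a finite type 'n (playing the role of [n]);
  vectors of Q^n are functions 'n \<Rightarrow> rat.\<close>

definition simple_graph :: "('n \<Rightarrow> 'n \<Rightarrow> bool) \<Rightarrow> bool" where
  "simple_graph E \<longleftrightarrow> (\<forall>u v. E u v \<longrightarrow> E v u) \<and> (\<forall>v. \<not> E v v)"

definition graph_connected :: "('n \<Rightarrow> 'n \<Rightarrow> bool) \<Rightarrow> bool" where
  "graph_connected E \<longleftrightarrow> (\<forall>u v. E\<^sup>*\<^sup>* u v)"

definition induced_connected :: "('n \<Rightarrow> 'n \<Rightarrow> bool) \<Rightarrow> 'n set \<Rightarrow> bool" where
  "induced_connected E I \<longleftrightarrow> I \<noteq> {} \<and>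
     (\<forall>u\<in>I. \<forall>v\<in>I. (\<lambda>x y. x \<in> I \<and> y \<in> I \<and> E x y)\<^sup>*\<^sup>* u v)"

definition H_of :: "'n set \<Rightarrow> ('n::finite \<Rightarrow> rat) set" where
  "H_of I = {x. (\<Sum>i\<in>I. x i) = 0}"

definition conn_subgraph_arr :: "('n::finite \<Rightarrow> 'n \<Rightarrow> bool) \<Rightarrow> ('n \<Rightarrow> rat) set set" where
  "conn_subgraph_arr E = {H_of I | I. I \<noteq> {} \<and> induced_connected E I}"

definition hyperplane :: "('n::finite \<Rightarrow> rat) set \<Rightarrow> bool" where
  "hyperplane H \<longleftrightarrow> (\<exists>a::'n \<Rightarrow> rat. a \<noteq> (\<lambda>_. 0) \<and> H = {x. (\<Sum>i\<in>UNIV. a i * x i) = 0})"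

definition arrangement :: "('n::finite \<Rightarrow> rat) set set \<Rightarrow> bool" where
  "arrangement A \<longleftrightarrow> finite A \<and> (\<forall>H\<in>A. hyperplane H)"

definition intersection_lattice :: "'a set set \<Rightarrow> 'a set set" where
  "intersection_lattice A = {\<Inter> S | S. S \<subseteq> A}"

definition lattice_iso :: "'a set set \<Rightarrow> 'b set set \<Rightarrow> bool" where
  "lattice_iso L M \<longleftrightarrow> (\<exists>f. bij_betw f L M \<and>
      (\<forall>X\<in>L. \<forall>Y\<in>L. (Y \<subseteq> X \<longleftrightarrow> f Y \<subseteq> f X)))"

definition linear_map :: "(('n \<Rightarrow> rat) \<Rightarrow> ('n \<Rightarrow> rat)) \<Rightarrow> bool" where
  "linear_map f \<longleftrightarrow> (\<forall>x y. f (\<lambda>i. x i + y i) = (\<lambda>i. f x i + f y i)) \<and>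
                    (\<forall>c x. f (\<lambda>i. c * x i) = (\<lambda>i. c * f x i))"

definition GL :: "(('n \<Rightarrow> rat) \<Rightarrow> ('n \<Rightarrow> rat)) set" where
  "GL = {f. linear_map f \<and> bij f}"

end

theory Submission
  imports Defs "HOL-Analysis.Analysis"
begin

definition lin :: "('n::finite \<Rightarrow> rat) \<Rightarrow> ('n \<Rightarrow> rat) \<Rightarrow> rat" where
  "lin a x = (\<Sum>i\<in>UNIV. a i * x i)"

definition kerf :: "('n::finite \<Rightarrow> rat) \<Rightarrow> ('n \<Rightarrow> rat) set" where
  "kerf a = {x. lin a x = 0}"

definition ev :: "'n \<Rightarrow> 'n \<Rightarrow> rat" where
  "ev j = (\<lambda>i. if i = j then 1 else 0)"

lemma hyperplane_kerf: "hyperplane H \<longleftrightarrow> (\<exists>a. a \<noteq> (\<lambda>_. 0) \<and> H = kerf a)"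
  by (simp add: hyperplane_def kerf_def lin_def)

lemma lin_ev[simp]: "lin a (ev j) = a j"
proof -
  have "lin a (ev j) = (\<Sum>i\<in>UNIV. if i = j then a i else 0)"
    unfolding lin_def ev_def by (rule sum.cong) auto
  thus ?thesis by simp
qed

lemma lin_add: "lin a (\<lambda>i. x i + y i) = lin a x + lin a y"
  by (simp add: lin_def sum.distrib algebra_simps)
lemma lin_diff: "lin a (\<lambda>i. x i - y i) = lin a x - lin a y"
  by (simp add: lin_def sum_subtractf algebra_simps)
lemma lin_scale: "lin a (\<lambda>i. s * x i) = s * lin a x"
  by (simp add: lin_def sum_distrib_left algebra_simps)
lemma lin_sum: "lin a (\<lambda>i. \<Sum>k\<in>K. f k i) = (\<Sum>k\<in>K. lin a (f k))"
  by (simp add: lin_def sum_distrib_left sum.swap[of _ K])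

lemma nonzero_ex: "a \<noteq> (\<lambda>_. 0) \<Longrightarrow> \<exists>k. a k \<noteq> 0"
  by auto

lemma ker_sub_eq:
  fixes a b :: "'n::finite \<Rightarrow> rat"
  assumes a: "a \<noteq> (\<lambda>_. 0)" and b: "b \<noteq> (\<lambda>_. 0)" and sub: "kerf a \<subseteq> kerf b"
  shows "kerf a = kerf b"
proof -
  obtain k where k: "a k \<noteq> 0" using a by auto
  define u where "u = (\<lambda>i. (1 / a k) * ev k i)"
  have lu: "lin a u = 1" using k by (simp add: u_def lin_scale[of a "1 / a k" "ev k", simplified])
  have key: "lin b z = lin a z * lin b u" for z
  proof -
    have "lin a (\<lambda>i. z i - lin a z * u i) = 0"
      by (simp add: lin_diff lin_scale[of a "lin a z" u, simplified] lu)
    hence "(\<lambda>i. z i - lin a z * u i) \<in> kerf b" using sub by (auto simp: kerf_def)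
    hence "lin b (\<lambda>i. z i - lin a z * u i) = 0" by (simp add: kerf_def)
    thus ?thesis by (simp add: lin_diff lin_scale[of b "lin a z" u, simplified])
  qed
  obtain k' where k': "b k' \<noteq> 0" using b by auto
  have "lin b u \<noteq> 0" using key[of "ev k'"] k' by auto
  have "kerf b \<subseteq> kerf a"
  proof
    fix z assume "z \<in> kerf b"
    hence "lin a z * lin b u = 0" using key[of z] by (simp add: kerf_def)
    thus "z \<in> kerf a" using \<open>lin b u \<noteq> 0\<close> by (simp add: kerf_def)
  qed
  thus ?thesis using sub by auto
qed

lemma kerf_ne_UNIV: "a \<noteq> (\<lambda>_. 0) \<Longrightarrow> kerf a \<noteq> UNIV"
proof
  assume "a \<noteq> (\<lambda>_. 0)" "kerf a = UNIV"
  then obtain k where "a k \<noteq> 0" by auto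
  moreover have "ev k \<in> kerf a" using \<open>kerf a = UNIV\<close> by auto
  ultimately show False by (simp add: kerf_def)
qed

definition coatom :: "'a set set \<Rightarrow> 'a set \<Rightarrow> bool" where
  "coatom L X \<longleftrightarrow> X \<in> L \<and> X \<noteq> UNIV \<and> (\<forall>Y\<in>L. X \<subseteq> Y \<longrightarrow> Y = X \<or> Y = UNIV)"

lemma UNIV_in_L: "UNIV \<in> intersection_lattice A"
  unfolding intersection_lattice_def by (auto intro!: exI[of _ "{}"])

lemma A_in_L: "H \<in> A \<Longrightarrow> H \<in> intersection_lattice A"
  unfolding intersection_lattice_def by (auto intro!: exI[of _ "{H}"])

lemma Inter_in_L: "S \<subseteq> A \<Longrightarrow> \<Inter>S \<in> intersection_lattice A"
  unfolding intersection_lattice_def by auto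

lemma coatom_iff:
  fixes A :: "('n::finite \<Rightarrow> rat) set set"
  assumes hyp: "\<forall>H\<in>A. hyperplane H"
  shows "coatom (intersection_lattice A) X \<longleftrightarrow> X \<in> A"
proof
  assume c: "coatom (intersection_lattice A) X"
  have cL: "X \<in> intersection_lattice A" using c by (simp add: coatom_def)
  have cU: "X \<noteq> UNIV" using c by (simp add: coatom_def)
  have cmax: "\<forall>Y\<in>intersection_lattice A. X \<subseteq> Y \<longrightarrow> Y = X \<or> Y = UNIV"
    using c by (simp add: coatom_def)
  obtain T where T: "T \<subseteq> A" "X = \<Inter>T" using cL unfolding intersection_lattice_def by blast
  have "T \<noteq> {}"
  proof
    assume "T = {}"
    hence "X = UNIV" using T(2) by simp
    thus False using cU by simp
  qed
  then obtain H where H: "H \<in> T" by auto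
  have HA: "H \<in> A" using H T(1) by blast
  have XH: "X \<subseteq> H" unfolding T(2) using H by (rule Inter_lower)
  have HL: "H \<in> intersection_lattice A" using A_in_L[OF HA] .
  obtain a where a: "a \<noteq> (\<lambda>_. 0)" "H = kerf a" using hyp HA unfolding hyperplane_kerf by blast
  have HU: "H \<noteq> UNIV" using kerf_ne_UNIV[OF a(1)] a(2) by simp
  have "H = X \<or> H = UNIV" using cmax HL XH by blast
  hence "H = X" using HU by simp
  thus "X \<in> A" using HA by simp
next
  assume X: "X \<in> A"
  obtain a where a: "a \<noteq> (\<lambda>_. 0)" "X = kerf a" using X hyp unfolding hyperplane_kerf by blast
  have max: "\<forall>Y\<in>intersection_lattice A. X \<subseteq> Y \<longrightarrow> Y = X \<or> Y = UNIV"
  proof (intro ballI impI)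
    fix Y assume Y: "Y \<in> intersection_lattice A" "X \<subseteq> Y"
    obtain T where T: "T \<subseteq> A" "Y = \<Inter>T" using Y(1) unfolding intersection_lattice_def by blast
    show "Y = X \<or> Y = UNIV"
    proof (cases "T = {}")
      case True then have "Y = UNIV" using T(2) by simp
      thus ?thesis by simp
    next
      case False
      then obtain H where H: "H \<in> T" by auto
      have HA: "H \<in> A" using H T(1) by blast
      obtain b where b: "b \<noteq> (\<lambda>_. 0)" "H = kerf b" using hyp HA unfolding hyperplane_kerf by blast
      have YH: "Y \<subseteq> H" unfolding T(2) using H by (rule Inter_lower)
      have XH: "X \<subseteq> H" using Y(2) YH by (rule subset_trans)
      have "kerf a = kerf b" using ker_sub_eq[OF a(1) b(1)] XH a(2) b(2) by simp
      hence "X = H" using a(2) b(2) by simp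
      hence "H \<subseteq> Y" using Y(2) by simp
      with YH have "Y = H" by (rule equalityI)
      thus ?thesis using \<open>X = H\<close> by simp
    qed
  qed
  have XU: "X \<noteq> UNIV" using kerf_ne_UNIV[OF a(1)] a(2) by simp
  show "coatom (intersection_lattice A) X"
    unfolding coatom_def using A_in_L[OF X] XU max by blast
qed

lemma coatom_iso:
  assumes F: "bij_betw F L M" and ord: "\<forall>X\<in>L. \<forall>Y\<in>L. (Y \<subseteq> X \<longleftrightarrow> F Y \<subseteq> F X)"
    and UL: "UNIV \<in> L" and UM: "UNIV \<in> M" and c: "coatom L X"
  shows "coatom M (F X)"
proof -
  have XL: "X \<in> L" "X \<noteq> UNIV" using c unfolding coatom_def by blast+
  have FM: "\<And>Y. Y \<in> L \<Longrightarrow> F Y \<in> M" using F unfolding bij_betw_def by blast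
  have FU: "F UNIV = UNIV"
  proof -
    have "UNIV \<in> F ` L" using UM F by (simp add: bij_betw_def)
    then obtain U where U: "U \<in> L" "F U = UNIV" by (auto elim!: imageE)
    have "F U \<subseteq> F UNIV" using ord[rule_format, OF UL U(1)] by simp
    thus ?thesis using U by auto
  qed
  have "F X \<noteq> UNIV"
  proof
    assume "F X = UNIV"
    hence "F UNIV \<subseteq> F X" by auto
    hence "UNIV \<subseteq> X" using ord[rule_format, OF XL(1) UL] by simp
    hence "X = UNIV" by (rule equalityI[OF subset_UNIV])
    with XL(2) show False by simp
  qed
  moreover have "\<forall>Y\<in>M. F X \<subseteq> Y \<longrightarrow> Y = F X \<or> Y = UNIV"
  proof (intro ballI impI)
    fix Y assume Y: "Y \<in> M" "F X \<subseteq> Y"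
    have "Y \<in> F ` L" using Y F by (simp add: bij_betw_def)
    then obtain Y' where Y': "Y' \<in> L" "Y = F Y'" by (auto elim!: imageE)
    have "X \<subseteq> Y'" using ord[rule_format, OF Y'(1) XL(1)] Y Y' by simp
    moreover have cmax: "\<forall>Y\<in>L. X \<subseteq> Y \<longrightarrow> Y = X \<or> Y = UNIV" using c unfolding coatom_def by simp
    ultimately have "Y' = X \<or> Y' = UNIV" using Y'(1) by simp
    thus "Y = F X \<or> Y = UNIV" using Y' FU by auto
  qed
  ultimately show ?thesis using FM[OF XL(1)] unfolding coatom_def by simp
qed

lemma lattice_to_h:
  fixes A C :: "('n::finite \<Rightarrow> rat) set set"
  assumes hypC: "\<forall>H\<in>C. hyperplane H" and hypA: "\<forall>H\<in>A. hyperplane H"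
    and iso: "lattice_iso (intersection_lattice C) (intersection_lattice A)"
  shows "\<exists>h. (\<forall>H\<in>A. h H \<in> C) \<and> C \<subseteq> h ` A \<and>
           (\<forall>S\<subseteq>A. \<forall>H\<in>A. (\<Inter>S \<subseteq> H \<longleftrightarrow> \<Inter>(h ` S) \<subseteq> h H))"
proof -
  let ?LC = "intersection_lattice C" and ?LA = "intersection_lattice A"
  obtain f where f: "bij_betw f ?LC ?LA" and ord: "\<forall>X\<in>?LC. \<forall>Y\<in>?LC. (Y \<subseteq> X \<longleftrightarrow> f Y \<subseteq> f X)"
    using iso by (auto simp: lattice_iso_def)
  define h where "h = inv_into ?LC f"
  have hbij: "bij_betw h ?LA ?LC" unfolding h_def by (rule bij_betw_inv_into[OF f])
  have fh: "\<And>X. X \<in> ?LA \<Longrightarrow> f (h X) = X" using f unfolding h_def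
    by (metis bij_betw_def f_inv_into_f)
  have hf: "\<And>Y. Y \<in> ?LC \<Longrightarrow> h (f Y) = Y" using f unfolding h_def
    by (metis bij_betw_def inv_into_f_f)
  have hL: "\<And>X. X \<in> ?LA \<Longrightarrow> h X \<in> ?LC" using hbij by (auto simp: bij_betw_def)
  have fL: "\<And>X. X \<in> ?LC \<Longrightarrow> f X \<in> ?LA" using f by (auto simp: bij_betw_def)
  have hord: "\<forall>X\<in>?LA. \<forall>Y\<in>?LA. (Y \<subseteq> X \<longleftrightarrow> h Y \<subseteq> h X)"
  proof (intro ballI)
    fix X Y assume X: "X \<in> ?LA" and Y: "Y \<in> ?LA"
    have "h Y \<subseteq> h X \<longleftrightarrow> f (h Y) \<subseteq> f (h X)" using ord[rule_format, OF hL[OF X] hL[OF Y]] .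
    thus "Y \<subseteq> X \<longleftrightarrow> h Y \<subseteq> h X" using fh[OF X] fh[OF Y] by simp
  qed
  have hA: "\<forall>H\<in>A. h H \<in> C"
  proof
    fix H assume "H \<in> A"
    hence "coatom ?LA H" using coatom_iff hypA by blast
    hence "coatom ?LC (h H)" using coatom_iso[OF hbij hord UNIV_in_L UNIV_in_L] by blast
    thus "h H \<in> C" using coatom_iff hypC by blast
  qed
  have Csub: "C \<subseteq> h ` A"
  proof
    fix K assume "K \<in> C"
    hence "coatom ?LC K" using coatom_iff hypC by blast
    hence "coatom ?LA (f K)" using coatom_iso[OF f ord UNIV_in_L UNIV_in_L] by blast
    hence "f K \<in> A" using coatom_iff hypA by blast
    moreover have "h (f K) = K" using hf A_in_L \<open>K \<in> C\<close> by blast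
    ultimately show "K \<in> h ` A" by force
  qed
  have meet: "h (\<Inter>S) = \<Inter>(h ` S)" if S: "S \<subseteq> A" for S
  proof (rule equalityI)
    have SL: "\<Inter>S \<in> ?LA" using S Inter_in_L by blast
    show "h (\<Inter>S) \<subseteq> \<Inter>(h ` S)"
    proof
      fix z assume z: "z \<in> h (\<Inter>S)"
      show "z \<in> \<Inter>(h ` S)"
      proof (rule InterI)
        fix K assume "K \<in> h ` S"
        then obtain H where H: "H \<in> S" "K = h H" by auto
        have "\<Inter>S \<subseteq> H" using H by auto
        have HL: "H \<in> ?LA" using A_in_L H S by blast
        have "h (\<Inter>S) \<subseteq> h H" using hord[rule_format, OF HL SL] \<open>\<Inter>S \<subseteq> H\<close> by simp
        thus "z \<in> K" using z H by auto
      qed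
    qed
    define Z where "Z = \<Inter>(h ` S)"
    have ZL: "Z \<in> ?LC" unfolding Z_def using S hA by (intro Inter_in_L) auto
    have "f Z \<subseteq> H" if H: "H \<in> S" for H
    proof -
      have "Z \<subseteq> h H" using H Z_def by auto
      have HL: "H \<in> ?LA" using A_in_L H S by blast
      have "f Z \<subseteq> f (h H)" using ord[rule_format, OF hL[OF HL] ZL] \<open>Z \<subseteq> h H\<close> by simp
      thus ?thesis using fh[OF HL] by simp
    qed
    hence "f Z \<subseteq> \<Inter>S" by auto
    hence "h (f Z) \<subseteq> h (\<Inter>S)" using hord[rule_format, OF SL fL[OF ZL]] by simp
    thus "\<Inter>(h ` S) \<subseteq> h (\<Inter>S)" using hf[OF ZL] Z_def by simp
  qed
  have "\<forall>S\<subseteq>A. \<forall>H\<in>A. (\<Inter>S \<subseteq> H \<longleftrightarrow> \<Inter>(h ` S) \<subseteq> h H)"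
  proof (intro allI impI ballI)
    fix S H assume S: "S \<subseteq> A" and H: "H \<in> A"
    have "\<Inter>S \<subseteq> H \<longleftrightarrow> h (\<Inter>S) \<subseteq> h H" using hord[rule_format, OF A_in_L[OF H] Inter_in_L[OF S]] by simp
    thus "\<Inter>S \<subseteq> H \<longleftrightarrow> \<Inter>(h ` S) \<subseteq> h H" using meet[OF S] by simp
  qed
  thus ?thesis using hA Csub by blast
qed

lemma complete:
  fixes c x :: "'n::finite \<Rightarrow> 'n \<Rightarrow> rat"
  assumes d: "\<forall>i j. lin (c i) (x j) = (if i = j then 1 else 0)"
  shows "z i = (\<Sum>k\<in>UNIV. lin (c k) z * x k i)"
proof -
  define Cm :: "rat^'n^'n" where "Cm = (\<chi> i k. c i k)"
  define Xm :: "rat^'n^'n" where "Xm = (\<chi> k j. x j k)"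
  have "Cm ** Xm = mat 1"
    using d by (simp add: Cm_def Xm_def matrix_matrix_mult_def mat_def vec_eq_iff lin_def)
  hence "Xm ** Cm = mat 1" using matrix_left_right_inverse by blast
  hence e: "\<And>i j. (\<Sum>k\<in>UNIV. x k i * c k j) = (if i = j then 1 else 0)"
    by (auto simp: Cm_def Xm_def matrix_matrix_mult_def mat_def vec_eq_iff)
  have "(\<Sum>k\<in>UNIV. lin (c k) z * x k i) = (\<Sum>k\<in>UNIV. \<Sum>j\<in>UNIV. z j * (x k i * c k j))"
    by (simp add: lin_def sum_distrib_right sum_distrib_left mult_ac)
  also have "\<dots> = (\<Sum>j\<in>UNIV. z j * (\<Sum>k\<in>UNIV. x k i * c k j))"
    by (subst sum.swap) (simp add: sum_distrib_left)
  also have "\<dots> = (\<Sum>j\<in>UNIV. if i = j then z j else 0)" by (rule sum.cong) (auto simp: e)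
  also have "\<dots> = z i" by simp
  finally show ?thesis by simp
qed


lemma H_of_kerf: "H_of I = kerf (\<lambda>i. if i \<in> I then 1 else 0)"
proof -
  have "lin (\<lambda>i. if i \<in> I then 1 else 0) x = sum x I" for x :: "'a \<Rightarrow> rat"
  proof -
    have "lin (\<lambda>i. if i \<in> I then 1 else 0) x = (\<Sum>i\<in>UNIV. if i \<in> I then x i else 0)"
      unfolding lin_def by (rule sum.cong) auto
    also have "\<dots> = sum x I" by (simp add: sum.inter_restrict[symmetric])
    finally show ?thesis .
  qed
  thus ?thesis by (simp add: H_of_def kerf_def)
qed

lemma hyp_H_of: "I \<noteq> {} \<Longrightarrow> hyperplane (H_of (I :: 'n::finite set))"
  unfolding hyperplane_kerf H_of_kerf
  by (rule exI[of _ "\<lambda>i. if i \<in> I then 1 else 0"]) (auto simp: fun_eq_iff)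

lemma main_alg:
  fixes A :: "('n::finite \<Rightarrow> rat) set set" and h :: "('n \<Rightarrow> rat) set \<Rightarrow> ('n \<Rightarrow> rat) set"
  assumes sing: "\<And>i. H_of {i} \<in> A" and full: "H_of UNIV \<in> A"
    and formA: "\<And>H. H \<in> A \<Longrightarrow> \<exists>I. I \<noteq> {} \<and> H = H_of I"
    and hyp: "\<And>H. H \<in> A \<Longrightarrow> hyperplane (h H)"
    and P2: "\<And>S H. S \<subseteq> A \<Longrightarrow> H \<in> A \<Longrightarrow> (\<Inter>S \<subseteq> H \<longleftrightarrow> \<Inter>(h ` S) \<subseteq> h H)"
  shows "\<exists>\<phi>\<in>GL. \<forall>H\<in>A. h H = \<phi> ` H"
proof -
  have "\<forall>i. \<exists>a. a \<noteq> (\<lambda>_. 0) \<and> h (H_of {i}) = kerf a"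
    using hyp[OF sing] unfolding hyperplane_kerf by blast
  then obtain c where c: "\<And>i. c i \<noteq> (\<lambda>_. 0)" "\<And>i. h (H_of {i}) = kerf (c i)" by metis
  obtain cN where cN: "cN \<noteq> (\<lambda>_. 0)" "h (H_of UNIV) = kerf cN"
    using hyp[OF full] unfolding hyperplane_kerf by blast
  have hS: "\<Inter>(h ` ((\<lambda>i. H_of {i}) ` K)) = {y. \<forall>i\<in>K. lin (c i) y = 0}" for K
    by (auto simp: image_image c(2) kerf_def)
  have xex: "\<exists>y. \<forall>i. lin (c i) y = (if i = j then 1 else 0)" for j
  proof -
    let ?S = "(\<lambda>i. H_of {i}) ` (-{j})"
    have SA: "?S \<subseteq> A" using sing by blast
    have "ev j \<in> \<Inter>?S" by (auto simp: H_of_def ev_def)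
    moreover have "ev j \<notin> H_of {j}" by (simp add: H_of_def ev_def)
    ultimately have "\<not> \<Inter>?S \<subseteq> H_of {j}" by blast
    hence "\<not> \<Inter>(h ` ?S) \<subseteq> h (H_of {j})" using P2[OF SA sing] by simp
    then obtain y where y1: "y \<in> \<Inter>(h ` ?S)" and y2: "y \<notin> h (H_of {j})" by blast
    have yi: "lin (c i) y = 0" if "i \<noteq> j" for i using y1 that hS[of "-{j}"] by auto
    have yj: "lin (c j) y \<noteq> 0" using y2 c(2) by (simp add: kerf_def)
    define y' where "y' = (\<lambda>k. (1 / lin (c j) y) * y k)"
    have "lin (c i) y' = (if i = j then 1 else 0)" for i
      using yi yj unfolding y'_def lin_scale by simp
    thus ?thesis by blast
  qed
  hence "\<forall>j. \<exists>y. \<forall>i. lin (c i) y = (if i = j then 1 else 0)" by blast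
  then obtain x where x: "\<And>i j. lin (c i) (x j) = (if i = j then 1 else 0)" by metis
  have comp: "z i = (\<Sum>k\<in>UNIV. lin (c k) z * x k i)" for z i
    by (rule complete) (simp add: x)
  have comp_lin: "lin a z = (\<Sum>k\<in>UNIV. lin (c k) z * lin a (x k))" for a z
  proof -
    have "z = (\<lambda>i. \<Sum>k\<in>UNIV. lin (c k) z * x k i)" by (rule ext) (rule comp)
    hence "lin a z = lin a (\<lambda>i. \<Sum>k\<in>UNIV. lin (c k) z * x k i)" by (rule arg_cong)
    also have "\<dots> = (\<Sum>k\<in>UNIV. lin a (\<lambda>i. lin (c k) z * x k i))" by (rule lin_sum)
    also have "\<dots> = (\<Sum>k\<in>UNIV. lin (c k) z * lin a (x k))" by (simp add: lin_scale)
    finally show ?thesis .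
  qed
  define \<mu> where "\<mu> j = lin cN (x j)" for j
  have \<mu>nz: "\<mu> j \<noteq> 0" for j
  proof
    assume \<mu>0: "\<mu> j = 0"
    let ?S = "insert (H_of UNIV) ((\<lambda>i. H_of {i}) ` (-{j}))"
    have SA: "?S \<subseteq> A" using sing full by blast
    have "\<Inter>?S \<subseteq> H_of {j}"
    proof
      fix y assume y: "y \<in> \<Inter>?S"
      have y0: "y i = 0" if "i \<noteq> j" for i using y that by (auto simp: H_of_def)
      have "sum y UNIV = 0" using y by (auto simp: H_of_def)
      moreover have "sum y UNIV = y j + sum y (UNIV - {j})" by (rule sum.remove) simp_all
      moreover have "sum y (UNIV - {j}) = 0" using y0 by (intro sum.neutral) auto
      ultimately have "y j = 0" by simp
      thus "y \<in> H_of {j}" by (simp add: H_of_def)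
    qed
    hence sub: "\<Inter>(h ` ?S) \<subseteq> h (H_of {j})" using P2[OF SA sing] by simp
    have "x j \<in> \<Inter>(h ` ?S)"
      using x \<mu>0 by (auto simp: c(2) cN(2) kerf_def \<mu>_def)
    hence "x j \<in> kerf (c j)" using sub c(2) by auto
    thus False using x[of j j] by (simp add: kerf_def)
  qed
  define \<phi> where "\<phi> y = (\<lambda>i. \<Sum>k\<in>UNIV. (y k / \<mu> k) * x k i)" for y
  define \<psi> where "\<psi> z = (\<lambda>k. \<mu> k * lin (c k) z)" for z
  have lin\<phi>: "lin (c i) (\<phi> y) = y i / \<mu> i" for i y
  proof -
    have "lin (c i) (\<phi> y) = (\<Sum>k\<in>UNIV. (y k / \<mu> k) * lin (c i) (x k))"
      unfolding \<phi>_def lin_sum lin_scale ..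
    also have "\<dots> = (\<Sum>k\<in>UNIV. if k = i then y k / \<mu> k else 0)"
      by (rule sum.cong) (auto simp: x)
    also have "\<dots> = y i / \<mu> i" by simp
    finally show ?thesis .
  qed
  have \<phi>\<psi>: "\<phi> (\<psi> z) = z" for z
  proof
    fix i
    have "\<phi> (\<psi> z) i = (\<Sum>k\<in>UNIV. lin (c k) z * x k i)"
      unfolding \<phi>_def \<psi>_def by (rule sum.cong) (simp_all add: \<mu>nz)
    also have "\<dots> = z i" using comp[of z i] by simp
    finally show "\<phi> (\<psi> z) i = z i" .
  qed
  have \<psi>\<phi>: "\<psi> (\<phi> y) = y" for y
    unfolding \<psi>_def by (rule ext) (simp add: lin\<phi> \<mu>nz)
  have img\<phi>: "\<phi> ` H = {z. \<psi> z \<in> H}" for H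
  proof
    show "\<phi> ` H \<subseteq> {z. \<psi> z \<in> H}" using \<psi>\<phi> by auto
    show "{z. \<psi> z \<in> H} \<subseteq> \<phi> ` H"
    proof
      fix z assume "z \<in> {z. \<psi> z \<in> H}"
      hence "\<psi> z \<in> H" by simp
      hence "\<phi> (\<psi> z) \<in> \<phi> ` H" by (rule imageI)
      thus "z \<in> \<phi> ` H" using \<phi>\<psi> by simp
    qed
  qed
  have GL: "\<phi> \<in> GL"
  proof -
    have add: "\<phi> (\<lambda>i. u i + v i) = (\<lambda>i. \<phi> u i + \<phi> v i)" for u v
      unfolding \<phi>_def by (simp add: add_divide_distrib distrib_right sum.distrib)
    have scl: "\<phi> (\<lambda>i. s * u i) = (\<lambda>i. s * \<phi> u i)" for s u
      unfolding \<phi>_def by (rule ext) (auto simp: sum_distrib_left intro!: sum.cong)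
    have "bij \<phi>" by (rule o_bij[of \<psi> \<phi>]) (simp_all add: fun_eq_iff \<psi>\<phi> \<phi>\<psi>)
    thus ?thesis using add scl by (simp add: GL_def linear_map_def)
  qed
  have main: "h H = \<phi> ` H" if HA: "H \<in> A" for H
  proof -
    obtain I where I: "I \<noteq> {}" "H = H_of I" using formA[OF HA] by blast
    obtain b where b: "b \<noteq> (\<lambda>_. 0)" "h H = kerf b"
      using hyp[OF HA] unfolding hyperplane_kerf by blast
    define \<beta> where "\<beta> k = lin b (x k)" for k
    have off: "\<beta> k = 0" if k: "k \<notin> I" for k
    proof -
      let ?S = "(\<lambda>i. H_of {i}) ` I"
      have SA: "?S \<subseteq> A" using sing by blast
      have "\<Inter>?S \<subseteq> H_of I"
      proof
        fix y assume y: "y \<in> \<Inter>?S"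
        have y0: "\<And>i. i \<in> I \<Longrightarrow> y i = 0" using y by (auto simp: H_of_def)
        hence "sum y I = 0" by (intro sum.neutral) auto
        thus "y \<in> H_of I" by (simp add: H_of_def)
      qed
      hence "\<Inter>(h ` ?S) \<subseteq> h H" using P2[OF SA HA] I(2) by simp
      moreover have "x k \<in> \<Inter>(h ` ?S)" using x k by (auto simp: c(2) kerf_def)
      ultimately have "x k \<in> kerf b" using b(2) by auto
      thus ?thesis by (simp add: kerf_def \<beta>_def)
    qed
    have on: "\<beta> k / \<mu> k = \<beta> k' / \<mu> k'" if k: "k \<in> I" and k': "k' \<in> I" for k k'
    proof -
      let ?S = "insert (H_of UNIV) ((\<lambda>i. H_of {i}) ` (-I))"
      have SA: "?S \<subseteq> A" using sing full by blast
      have "\<Inter>?S \<subseteq> H_of I"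
      proof
        fix y assume y: "y \<in> \<Inter>?S"
        have y0: "\<And>i. i \<notin> I \<Longrightarrow> y i = 0" using y by (auto simp: H_of_def)
        have "sum y UNIV = 0" using y by (auto simp: H_of_def)
        moreover have "sum y UNIV = sum y (UNIV - I) + sum y I" by (rule sum.subset_diff) simp_all
        moreover have "sum y (UNIV - I) = 0" using y0 by (intro sum.neutral) auto
        ultimately show "y \<in> H_of I" by (simp add: H_of_def)
      qed
      hence sub: "\<Inter>(h ` ?S) \<subseteq> h H" using P2[OF SA HA] I(2) by simp
      define w where "w = (\<lambda>i. (1 / \<mu> k) * x k i - (1 / \<mu> k') * x k' i)"
      have lw: "lin a w = (1 / \<mu> k) * lin a (x k) - (1 / \<mu> k') * lin a (x k')" for a
        unfolding w_def lin_diff lin_scale ..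
      have "w \<in> \<Inter>(h ` ?S)"
      proof -
        have "lin cN w = 0" using \<mu>nz[of k] \<mu>nz[of k'] by (simp add: lw \<mu>_def[symmetric])
        moreover have "lin (c i) w = 0" if "i \<notin> I" for i using that k k' by (auto simp: lw x)
        ultimately show ?thesis by (auto simp: c(2) cN(2) kerf_def)
      qed
      hence "lin b w = 0" using sub b(2) by (auto simp: kerf_def)
      hence "(1 / \<mu> k) * \<beta> k - (1 / \<mu> k') * \<beta> k' = 0" by (simp add: lw \<beta>_def)
      thus ?thesis by simp
    qed
    obtain k0 where k0: "k0 \<in> I" using I(1) by blast
    define t where "t = \<beta> k0 / \<mu> k0"
    have \<beta>t: "\<beta> k = (if k \<in> I then t * \<mu> k else 0)" for k
    proof (cases "k \<in> I")
      case True
      hence "\<beta> k / \<mu> k = t" using on[OF True k0] t_def by simp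
      hence "\<beta> k = t * \<mu> k" using \<mu>nz[of k] by (simp add: field_simps)
      thus ?thesis using True by simp
    next
      case False thus ?thesis using off by simp
    qed
    have linb: "lin b z = t * (\<Sum>k\<in>I. \<mu> k * lin (c k) z)" for z
    proof -
      have "lin b z = (\<Sum>k\<in>UNIV. lin (c k) z * \<beta> k)" using comp_lin[of b z] by (simp add: \<beta>_def)
      also have "\<dots> = (\<Sum>k\<in>UNIV. if k \<in> I then t * (\<mu> k * lin (c k) z) else 0)"
        by (rule sum.cong) (simp_all add: \<beta>t)
      also have "\<dots> = (\<Sum>k\<in>I. t * (\<mu> k * lin (c k) z))" by (simp add: sum.inter_restrict[symmetric])
      also have "\<dots> = t * (\<Sum>k\<in>I. \<mu> k * lin (c k) z)" by (simp add: sum_distrib_left)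
      finally show ?thesis .
    qed
    have t0: "t \<noteq> 0"
    proof
      assume "t = 0"
      hence "b j = 0" for j using linb[of "ev j"] by simp
      hence "b = (\<lambda>_. 0)" by auto
      thus False using b(1) by simp
    qed
    have "h H = {z. (\<Sum>k\<in>I. \<mu> k * lin (c k) z) = 0}" using b(2) linb t0 by (auto simp: kerf_def)
    also have "\<dots> = {z. \<psi> z \<in> H_of I}" by (simp add: \<psi>_def H_of_def)
    also have "\<dots> = \<phi> ` H" using img\<phi>[of H] I(2) by simp
    finally show ?thesis .
  qed
  show ?thesis using GL main by blast
qed


theorem mainTheorem1:
  fixes E :: "'n::finite \<Rightarrow> 'n \<Rightarrow> bool"
    and C :: "('n \<Rightarrow> rat) set set"
  assumes "simple_graph E"
    and "graph_connected E"
    and "arrangement C"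
    and "lattice_iso (intersection_lattice C) (intersection_lattice (conn_subgraph_arr E))"
  shows "\<exists>\<phi>\<in>GL. C = (\<lambda>H. \<phi> ` H) ` conn_subgraph_arr E"
proof -
  let ?A = "conn_subgraph_arr E"
  have Aform: "H \<in> ?A \<longleftrightarrow> (\<exists>I. H = H_of I \<and> I \<noteq> {} \<and> induced_connected E I)" for H
    by (auto simp: conn_subgraph_arr_def)
  have hypA: "\<forall>H\<in>?A. hyperplane H"
  proof
    fix H assume "H \<in> ?A"
    then obtain I where "H = H_of I" "I \<noteq> {}" using Aform by blast
    thus "hyperplane H" using hyp_H_of by simp
  qed
  have hypC: "\<forall>H\<in>C. hyperplane H" using assms(3) by (simp add: arrangement_def)
  obtain h where hall: "(\<forall>H\<in>?A. h H \<in> C) \<and> C \<subseteq> h ` ?A \<and>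
      (\<forall>S\<subseteq>?A. \<forall>H\<in>?A. (\<Inter>S \<subseteq> H \<longleftrightarrow> \<Inter>(h ` S) \<subseteq> h H))"
    using lattice_to_h[OF hypC hypA assms(4)] ..
  have h1: "\<forall>H\<in>?A. h H \<in> C" using hall by (rule conjunct1)
  have h2: "C \<subseteq> h ` ?A" using hall[THEN conjunct2] by (rule conjunct1)
  have h3: "\<forall>S\<subseteq>?A. \<forall>H\<in>?A. (\<Inter>S \<subseteq> H \<longleftrightarrow> \<Inter>(h ` S) \<subseteq> h H)"
    using hall[THEN conjunct2] by (rule conjunct2)
  have sing: "H_of {i} \<in> ?A" for i
  proof -
    have "induced_connected E {i}" by (simp add: induced_connected_def)
    thus ?thesis using Aform by blast
  qed
  have full: "H_of UNIV \<in> ?A"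
  proof -
    have "induced_connected E UNIV"
      using assms(2) by (simp add: induced_connected_def graph_connected_def)
    thus ?thesis using Aform by blast
  qed
  have formA: "\<exists>I. I \<noteq> {} \<and> H = H_of I" if "H \<in> ?A" for H using that Aform by blast
  have hyp: "hyperplane (h H)" if "H \<in> ?A" for H
  proof -
    have "h H \<in> C" using h1 that by simp
    thus ?thesis using hypC by simp
  qed
  have P2: "\<Inter>S \<subseteq> H \<longleftrightarrow> \<Inter>(h ` S) \<subseteq> h H" if "S \<subseteq> ?A" "H \<in> ?A" for S H
    using h3[rule_format, OF that] .
  obtain \<phi> where \<phi>1: "\<phi> \<in> GL" and \<phi>2: "\<forall>H\<in>?A. h H = \<phi> ` H"
    using main_alg[of ?A h, OF sing full formA hyp P2] ..
  have "h ` ?A \<subseteq> C" using h1 by auto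
  with h2 have "C = h ` ?A" by (rule equalityI)
  also have "\<dots> = (\<lambda>H. \<phi> ` H) ` ?A" using \<phi>2 by (intro image_cong) simp_all
  finally show ?thesis by (rule bexI[OF _ \<phi>1])
qed

end
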